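(* Let $(M_k)_{k\in\mathbb{N}}$ be the sequence of matrices of a directive sequence and let $v\in\mathbb{R}_+^{d+1}$ have a totally irrational direction and satisfy $\bigcap_{n\in\mathbb{N}}M_{[0,n)}\mathbb{R}_+^{d+1}=\mathbb{R}_+v$. Then for every $k\in\mathbb{N}$ there exists $n\ge k$ such that $M_{[k,n)}>0$ (all entries positive).
   Context: $S$ is a finite set of unimodular substitutions on $A=\{0,\dots,d\}$; for a directive sequence $s=(s_k)\in S^{\mathbb{N}}$, $M_k=\mathrm{ab}(s_k)$ is the (non-negative integer, invertible) abelianization matrix of $s_k$, and $M_{[k,n)}=M_k\cdots M_{n-1}$. A vector $v\in\mathbb{R}_+^{d+1}$ has a totally irrational direction if its coordinates are linearly independent over $\mathbb{Q}$. *)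

theory Defs
  imports "HOL-Analysis.Analysis"
begin

text \<open>The alphabet A = {0,...,d} is modelled by a finite type 'a (with CARD('a) = d+1).
  A substitution is a map from letters to (non-empty) words.\<close>

type_synonym 'a subst = "'a \<Rightarrow> 'a list"

definition nonerasing :: "'a subst \<Rightarrow> bool" where
  "nonerasing \<sigma> \<longleftrightarrow> (\<forall>a. \<sigma> a \<noteq> [])"

definition ab :: "('a::finite) subst \<Rightarrow> real^'a^'a" where
  "ab \<sigma> = (\<chi> i j. real (count_list (\<sigma> j) i))"

definition unimodular_subst :: "('a::finite) subst \<Rightarrow> bool" where
  "unimodular_subst \<sigma> \<longleftrightarrow> nonerasing \<sigma> \<and> \<bar>det (ab \<sigma>)\<bar> = 1"

text \<open>M_{[k,n)} = M_k M_{k+1} ... M_{n-1} (identity if n \<le> k).\<close>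
fun mat_seg :: "(nat \<Rightarrow> real^'a^'a) \<Rightarrow> nat \<Rightarrow> nat \<Rightarrow> real^'a^'a" where
  "mat_seg M k 0 = mat 1"
| "mat_seg M k (Suc n) = (if Suc n \<le> k then mat 1 else mat_seg M k n ** M n)"

definition nonneg_orthant :: "(real^'a) set" where
  "nonneg_orthant = {x. \<forall>i. 0 \<le> x $ i}"

definition pos_matrix :: "real^'a^'a \<Rightarrow> bool" where
  "pos_matrix P \<longleftrightarrow> (\<forall>i j. 0 < P $ i $ j)"

definition totally_irrational :: "real^('a::finite) \<Rightarrow> bool" where
  "totally_irrational v \<longleftrightarrow>
     (\<forall>q :: 'a \<Rightarrow> rat. (\<Sum>i\<in>UNIV. of_rat (q i) * v $ i) = 0 \<longrightarrow> (\<forall>i. q i = 0))"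

end

theory Submission
  imports Defs
begin

lemma mat_seg_le: "n \<le> k \<Longrightarrow> mat_seg M k n = mat 1"
  by (cases n) auto

lemma mat_seg_split:
  "k \<le> m \<Longrightarrow> m \<le> n \<Longrightarrow> mat_seg M k n = mat_seg M k m ** mat_seg M m n"
proof (induction n)
  case 0
  then show ?case by simp
next
  case (Suc n)
  show ?case
  proof (cases "m = Suc n")
    case True
    then show ?thesis by (simp add: mat_seg_le)
  next
    case False
    then have "m \<le> n" using Suc.prems by simp
    then show ?thesis using Suc by (simp add: matrix_mul_assoc)
  qed
qed

lemma mat_seg_nonneg:
  assumes "\<And>n i j. 0 \<le> M n $ i $ j"
  shows "0 \<le> mat_seg M k n $ i $ j"
  using assms
  by (induction n arbitrary: i j) (auto simp: mat_def matrix_matrix_mult_def intro!: sum_nonneg)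

lemma mat_seg_rat:
  assumes "\<And>n i j. M n $ i $ j \<in> \<rat>"
  shows "mat_seg M k n $ i $ j \<in> \<rat>"
  using assms
  by (induction n arbitrary: i j) (auto simp: mat_def matrix_matrix_mult_def)

lemma mat_seg_det:
  assumes "\<And>n. det (M n) \<noteq> 0"
  shows "det (mat_seg M k n) \<noteq> 0"
  using assms
  by (induction n) (auto simp: det_mul)

lemma det_rat:
  fixes A :: "real^'n^'n"
  assumes "\<And>i j. A $ i $ j \<in> \<rat>"
  shows "det A \<in> \<rat>"
  unfolding det_def using assms by (intro Rats_sum Rats_mult Rats_prod) auto

lemma nonneg_mult:
  fixes A :: "real^'n^'n"
  assumes "\<And>i j. 0 \<le> A $ i $ j" "\<And>i. 0 \<le> x $ i"
  shows "0 \<le> (A *v x) $ i"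
  using assms by (auto simp: matrix_vector_mult_def intro!: sum_nonneg)

lemma inv_ex:
  fixes A :: "real^'n^'n"
  assumes "det A \<noteq> 0"
  obtains B where "A ** B = mat 1" "B ** A = mat 1"
  using assms invertible_det_nz[of A] unfolding invertible_def by blast


lemma lim_cone:
  fixes y :: "nat \<Rightarrow> real^'n" and B :: "real^'n^'n"
  assumes "(y \<circ> f) \<longlonglongrightarrow> c" "\<And>n l. n \<ge> m \<Longrightarrow> 0 \<le> (B *v y (f n)) $ l"
  shows "0 \<le> (B *v c) $ l"
proof -
  have "c \<in> {x. inner (B $ l) x \<ge> 0}"
  proof (rule Lim_in_closed_set[OF closed_halfspace_ge _ _ assms(1)])
    show "\<forall>\<^sub>F x in sequentially. (y \<circ> f) x \<in> {x. 0 \<le> inner (B $ l) x}"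
      using assms(2) unfolding eventually_sequentially
      by (auto simp: matrix_vector_mul_component[symmetric])
  qed simp
  then show ?thesis by (simp add: matrix_vector_mul_component)
qed

lemma lim_zero:
  fixes y :: "nat \<Rightarrow> real^'n"
  assumes "(y \<circ> f) \<longlonglongrightarrow> c" "\<And>n. y n $ i = 0"
  shows "c $ i = 0"
proof -
  have "c \<in> {x. inner (axis i 1) x = 0}"
  proof (rule Lim_in_closed_set[OF closed_hyperplane _ _ assms(1)])
    show "\<forall>\<^sub>F x in sequentially. (y \<circ> f) x \<in> {x. inner (axis i 1) x = 0}"
      using assms(2) by (auto simp: inner_axis')
  qed simp
  then show ?thesis by (simp add: inner_axis')
qed

theorem lemma3p30:
  fixes S :: "('a::finite) subst set"
    and s :: "nat \<Rightarrow> 'a subst"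
    and v :: "real^'a"
  assumes "finite S"
    and "\<forall>\<sigma>\<in>S. unimodular_subst \<sigma>"
    and "\<forall>k. s k \<in> S"
    and "v \<in> nonneg_orthant"
    and "totally_irrational v"
    and "(\<Inter>n. (\<lambda>x. mat_seg (\<lambda>k. ab (s k)) 0 n *v x) ` nonneg_orthant)
           = {c *\<^sub>R v | c. c \<ge> 0}"
  shows "\<forall>k. \<exists>n\<ge>k. pos_matrix (mat_seg (\<lambda>k. ab (s k)) k n)"
proof (rule allI, rule ccontr)
  fix k
  define M where "M = (\<lambda>k. ab (s k))"
  define P where "P = mat_seg M"
  assume "\<not> (\<exists>n\<ge>k. pos_matrix (mat_seg (\<lambda>k. ab (s k)) k n))"
  then have notpos: "\<And>n. n \<ge> k \<Longrightarrow> \<not> pos_matrix (P k n)"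
    unfolding P_def M_def by blast
  have Mnn: "\<And>n i j. 0 \<le> M n $ i $ j" by (simp add: M_def ab_def)
  have Mrat: "\<And>n i j. M n $ i $ j \<in> \<rat>" by (simp add: M_def ab_def)
  have Mdet: "\<And>n. det (M n) \<noteq> 0"
  proof -
    fix n
    have "\<bar>det (ab (s n))\<bar> = 1" using assms(2,3) unfolding unimodular_subst_def by blast
    then show "det (M n) \<noteq> 0" unfolding M_def by auto
  qed
  have Pnn: "\<And>a b n i j. 0 \<le> P a b $ i $ j" unfolding P_def by (rule mat_seg_nonneg[OF Mnn])
  have Prat: "\<And>a b i j. P a b $ i $ j \<in> \<rat>" unfolding P_def by (rule mat_seg_rat[OF Mrat])
  have Pdet: "\<And>a b. det (P a b) \<noteq> 0" unfolding P_def by (rule mat_seg_det[OF Mdet])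
  have Psplit: "\<And>a b c. a \<le> b \<Longrightarrow> b \<le> c \<Longrightarrow> P a c = P a b ** P b c"
    unfolding P_def by (rule mat_seg_split)
  have Pid: "P a a = mat 1" for a unfolding P_def by (simp add: mat_seg_le)
  have zero: "\<exists>ij. P k n $ fst ij $ snd ij = 0" if "n \<ge> k" for n
  proof -
    from notpos[OF that] obtain i j where "\<not> 0 < P k n $ i $ j"
      unfolding pos_matrix_def by blast
    with Pnn[of k n i j] have "P k n $ i $ j = 0" by linarith
    then show ?thesis by (intro exI[of _ "(i,j)"]) simp
  qed
  have "\<exists>ij. infinite {n. n \<ge> k \<and> P k n $ fst ij $ snd ij = 0}"
  proof (rule ccontr)
    assume "\<not> ?thesis"
    then have "finite (\<Union>ij. {n. n \<ge> k \<and> P k n $ fst ij $ snd ij = 0})" by auto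
    moreover have "{n. n \<ge> k} \<subseteq> (\<Union>ij. {n. n \<ge> k \<and> P k n $ fst ij $ snd ij = 0})"
      using zero by auto
    ultimately have "finite {n::nat. n \<ge> k}" by (rule finite_subset[rotated])
    then show False using infinite_Ici[of k] by (simp add: atLeast_def)
  qed
  then obtain i j where infZ: "infinite {n. n \<ge> k \<and> P k n $ i $ j = 0}" by auto
  define Z where "Z = {n. n \<ge> k \<and> P k n $ i $ j = 0}"
  have "\<exists>n\<ge>m. n \<in> Z" for m using infZ unfolding Z_def infinite_nat_iff_unbounded_le by blast
  define r where "r m = (SOME n. n \<ge> m \<and> n \<in> Z)" for m
  have r: "r m \<ge> m \<and> r m \<in> Z" for m
    unfolding r_def by (rule someI_ex) (use \<open>\<And>m. \<exists>n\<ge>m. n \<in> Z\<close> in blast)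
  define col where "col m = P k (r m) *v axis j 1" for m
  have colnz: "col m \<noteq> 0" for m
  proof
    assume "col m = 0"
    obtain B where B: "B ** P k (r m) = mat 1" using inv_ex[OF Pdet] by metis
    have "axis j (1::real) = B *v col m"
      unfolding col_def matrix_vector_mul_assoc B by simp
    then show False using \<open>col m = 0\<close> by simp
  qed
  define y where "y m = (1 / norm (col m)) *\<^sub>R col m" for m
  have ysph: "\<forall>m. y m \<in> sphere 0 1" using colnz by (simp add: y_def)
  obtain c f where c: "c \<in> sphere 0 1" and f: "strict_mono f" and lim: "(y \<circ> f) \<longlonglongrightarrow> c"
    using seq_compactE[OF compact_imp_seq_compact[OF compact_sphere] ysph] by metis
  have yi: "y m $ i = 0" for m
    using r[of m] by (simp add: y_def col_def Z_def matrix_vector_mult_basis column_def)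
  have ci: "c $ i = 0" by (rule lim_zero[OF lim yi])
  have cone: "\<exists>z. (\<forall>l. 0 \<le> z $ l) \<and> P k m' *v z = c" if "m' \<ge> k" for m'
  proof -
    obtain B where B1: "P k m' ** B = mat 1" and B2: "B ** P k m' = mat 1"
      using inv_ex[OF Pdet] by metis
    have "0 \<le> (B *v c) $ l" for l
    proof (rule lim_cone[OF lim])
      fix n l assume "n \<ge> m'"
      then have "r (f n) \<ge> m'" using r[of "f n"] seq_suble[OF f, of n] by linarith
      then have "P k (r (f n)) = P k m' ** P m' (r (f n))" using that by (intro Psplit)
      then have "B *v y (f n) = (1 / norm (col (f n))) *\<^sub>R (P m' (r (f n)) *v axis j 1)"
        unfolding y_def col_def
        by (simp add: matrix_vector_mult_scaleR matrix_vector_mul_assoc matrix_mul_assoc B2)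
      moreover have "0 \<le> (P m' (r (f n)) *v axis j 1) $ l"
        by (rule nonneg_mult[OF Pnn]) (simp add: axis_def)
      ultimately show "0 \<le> (B *v y (f n)) $ l" by simp
    qed
    moreover have "P k m' *v (B *v c) = c" by (simp add: matrix_vector_mul_assoc B1)
    ultimately show ?thesis by blast
  qed
  have cnn: "0 \<le> c $ l" for l using cone[of k] by (auto simp: Pid)
  define A where "A = P 0 k"
  have "A *v c \<in> (\<Inter>n. (\<lambda>x. P 0 n *v x) ` nonneg_orthant)"
  proof (rule InterI)
    fix X assume "X \<in> range (\<lambda>n. (\<lambda>x. P 0 n *v x) ` nonneg_orthant)"
    then obtain n where X: "X = (\<lambda>x. P 0 n *v x) ` nonneg_orthant" by auto
    show "A *v c \<in> X"
    proof (cases "n \<ge> k")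
      case True
      obtain z where z: "\<forall>l. 0 \<le> z $ l" "P k n *v z = c" using cone[OF True] by blast
      have "A *v c = P 0 n *v z"
        unfolding A_def Psplit[OF _ True, of 0, simplified] z(2)[symmetric]
        by (simp add: matrix_vector_mul_assoc)
      then show ?thesis using z(1) unfolding X nonneg_orthant_def by auto
    next
      case False
      have "A *v c = P 0 n *v (P n k *v c)"
        unfolding A_def using False by (simp add: Psplit[of 0 n k] matrix_vector_mul_assoc)
      moreover have "\<forall>l. 0 \<le> (P n k *v c) $ l" using nonneg_mult[OF Pnn cnn] by blast
      ultimately show ?thesis unfolding X nonneg_orthant_def by auto
    qed
  qed
  then have "A *v c \<in> {c *\<^sub>R v | c. c \<ge> 0}"
    using assms(6) unfolding P_def M_def by simp
  then obtain t where t: "A *v c = t *\<^sub>R v" by auto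
  obtain N where N1: "N ** A = mat 1" and N2: "A ** N = mat 1"
    using inv_ex[OF Pdet[of 0 k]] unfolding A_def by metis
  have "c = N *v (A *v c)" by (simp add: matrix_vector_mul_assoc N1)
  then have ceq: "c = t *\<^sub>R (N *v v)" by (simp add: t matrix_vector_mult_scaleR)
  have "c \<noteq> 0" using c by auto
  then have "t \<noteq> 0" using ceq by auto
  with ci ceq have Nv: "(N *v v) $ i = 0" by simp
  have Nrat: "N $ i $ l \<in> \<rat>" for l
  proof -
    have eqa: "A *v (N *v axis l 1) = axis l 1" by (simp add: matrix_vector_mul_assoc N2)
    have "det (\<chi> a b. if b = i then axis l 1 $ a else A $ a $ b) = (N *v axis l 1) $ i * det A"
      using cramer_lemma[where A=A and k=i and x="N *v axis l 1"] by (simp only: eqa)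
    also have "\<dots> = N $ i $ l * det A"
      by (simp add: matrix_vector_mult_basis column_def)
    finally have e: "N $ i $ l = det (\<chi> a b. if b = i then axis l 1 $ a else A $ a $ b) / det A"
      using Pdet[of 0 k] unfolding A_def by simp
    have "det (\<chi> a b. if b = i then axis l (1::real) $ a else A $ a $ b) \<in> \<rat>"
      by (rule det_rat) (auto simp: A_def Prat axis_def)
    moreover have "det A \<in> \<rat>" by (rule det_rat) (simp add: A_def Prat)
    ultimately show ?thesis unfolding e by (rule Rats_divide)
  qed
  define q where "q l = (SOME x. of_rat x = N $ i $ l)" for l
  have q: "of_rat (q l) = N $ i $ l" for l
    unfolding q_def by (rule someI_ex) (use Nrat[of l] in \<open>auto simp: Rats_def\<close>)
  have "(\<Sum>l\<in>UNIV. of_rat (q l) * v $ l) = 0"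
    using Nv by (simp add: q matrix_vector_mult_def)
  then have "\<forall>l. q l = 0" using assms(5) unfolding totally_irrational_def by blast
  then have N0: "N $ i $ l = 0" for l using q[of l] by simp
  have "(N ** A) $ i $ i = 0" by (simp add: matrix_matrix_mult_def N0)
  then show False using N1 by (simp add: mat_def)
qed

end
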